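(* There exist universal constants $c>0,\Delta>0$ (not depending on $A,\sigma,m_1,m_2,x$) such that the following holds. Let $A\ge0$, $\sigma>0$, $m_1,m_2:\mathcal{X}\to\mathbb{R}$, and fix $x\in\mathcal{X}$ with $|m_1(x)-m_2(x)|/\sqrt{\sigma^2+A}\le\Delta$. Then for every $t:\mathcal{X}\times\mathbb{R}\to\mathbb{R}$, $$\frac12\big[L(t;m_1,A\mid x)+L(t;m_2,A\mid x)\big]\ \ge\ c\,\frac{\sigma^4}{(\sigma^2+A)^2}\big(m_1(x)-m_2(x)\big)^2.$$
   Context: Model: $X\sim\mathbb{P}^X$, $\mu\mid X\sim N(m(X),A)$, $Z\mid\mu\sim N(\mu,\sigma^2)$. Bayes rule $t^*_{m,A}(x,z)=\frac{A}{\sigma^2+A}z+\frac{\sigma^2}{\sigma^2+A}m(x)$. Pointwise excess risk: $L(t;m,A\mid x)=\mathbb{E}_{m,A}\big[(t(x,Z)-\mu)^2-(t^*_{m,A}(x,Z)-\mu)^2\mid X=x\big]$. *)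

theory Defs
  imports "HOL-Probability.Probability"
begin

definition tstar :: "('x \<Rightarrow> real) \<Rightarrow> real \<Rightarrow> real \<Rightarrow> 'x \<times> real \<Rightarrow> real" where
  "tstar m A \<sigma> xz = A / (\<sigma>\<^sup>2 + A) * snd xz + \<sigma>\<^sup>2 / (\<sigma>\<^sup>2 + A) * m (fst xz)"

text \<open>Conditional risk E[(f(Z) - mu)^2 | X = x] where, given X = x with m(x) = mx,
  mu ~ N(mx, A) and Z | mu ~ N(mu, sigma^2).  Realised via independent standard normals
  U, V: mu = mx + sqrt A * U, Z = mu + sigma * V (this also covers A = 0, where mu is
  the point mass at mx).\<close>
definition cond_risk :: "(real \<Rightarrow> real) \<Rightarrow> real \<Rightarrow> real \<Rightarrow> real \<Rightarrow> ennreal" where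
  "cond_risk f mx A \<sigma> =
     (\<integral>\<^sup>+ w. ennreal (std_normal_density (fst w) * std_normal_density (snd w) *
        (f (mx + sqrt A * fst w + \<sigma> * snd w) - (mx + sqrt A * fst w))\<^sup>2)
      \<partial>(lborel \<Otimes>\<^sub>M lborel))"

text \<open>Pointwise excess risk L(t; m, A | x) (extended real; the Bayes risk is finite).\<close>
definition excess_risk :: "('x \<times> real \<Rightarrow> real) \<Rightarrow> ('x \<Rightarrow> real) \<Rightarrow> real \<Rightarrow> real \<Rightarrow> 'x \<Rightarrow> ereal" where
  "excess_risk t m A \<sigma> x =
     enn2ereal (cond_risk (\<lambda>z. t (x, z)) (m x) A \<sigma>)
     - enn2ereal (cond_risk (\<lambda>z. tstar m A \<sigma> (x, z)) (m x) A \<sigma>)"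

end

theory Submission
  imports Defs
begin


lemma gauss_quad:
  fixes \<mu> \<tau> F a :: real assumes tp: "\<tau> > 0"
  shows "(\<integral>\<^sup>+u. ennreal (normal_density \<mu> \<tau> u * (F - a*u)\<^sup>2) \<partial>lborel) = ennreal ((F - a*\<mu>)\<^sup>2 + a\<^sup>2*\<tau>\<^sup>2)"
proof -
  let ?P = "F - a*\<mu>"
  have h0: "has_bochner_integral lborel (\<lambda>x. normal_density \<mu> \<tau> x * (x-\<mu>)^(2*0)) 1"
    using normal_moment_even[OF tp, of \<mu> 0] by simp
  have h1: "has_bochner_integral lborel (\<lambda>x. normal_density \<mu> \<tau> x * (x-\<mu>)^(2*0+1)) 0"
    using normal_moment_odd[OF tp, of \<mu> 0] by simp
  have h2: "has_bochner_integral lborel (\<lambda>x. normal_density \<mu> \<tau> x * (x-\<mu>)^(2*1)) (\<tau>\<^sup>2)"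
    using normal_moment_even[OF tp, of \<mu> 1] by simp
  have "has_bochner_integral lborel (\<lambda>x. ?P\<^sup>2 * (normal_density \<mu> \<tau> x * (x-\<mu>)^(2*0))
      + (- 2*?P*a) * (normal_density \<mu> \<tau> x * (x-\<mu>)^(2*0+1)) + a\<^sup>2 * (normal_density \<mu> \<tau> x * (x-\<mu>)^(2*1)))
      (?P\<^sup>2 * 1 + (- 2*?P*a) * 0 + a\<^sup>2 * \<tau>\<^sup>2)"
    by (intro has_bochner_integral_add has_bochner_integral_mult_right h0 h1 h2)
  then have hb: "has_bochner_integral lborel (\<lambda>u. normal_density \<mu> \<tau> u * (F - a*u)\<^sup>2) (?P\<^sup>2 + a\<^sup>2*\<tau>\<^sup>2)"
    by (rule has_bochner_integral_cong[THEN iffD1, rotated -1]) (auto simp: power2_eq_square algebra_simps)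
  show ?thesis
    using nn_integral_eq_integral[OF integrable.intros[OF hb]] has_bochner_integral_integral_eq[OF hb]
    by simp
qed



lemma ex_aux:
  fixes \<sigma> r S u y :: real assumes sp: "\<sigma> > 0" and S: "S = \<sigma>\<^sup>2 + r\<^sup>2"
  shows "- u\<^sup>2 / 2 + - ((y - r * u)/\<sigma>)\<^sup>2 / 2
     = -(y - 0)\<^sup>2 / (2 * S) + -(u - r * y / S)\<^sup>2 / (2 * (\<sigma>\<^sup>2/S))"
proof -
  have Sp: "S > 0" using S sp by (simp add: add_pos_nonneg)
  have "(- u\<^sup>2 / 2 + - ((y - r * u)/\<sigma>)\<^sup>2 / 2) * (2*\<sigma>\<^sup>2*S) = - S*\<sigma>\<^sup>2*u\<^sup>2 - S*(y - r*u)\<^sup>2"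
    using sp Sp by (simp add: field_simps power2_eq_square)
  also have "\<dots> = -\<sigma>\<^sup>2*y\<^sup>2 - (S*u - r*y)\<^sup>2"
    unfolding S by (simp add: power2_eq_square algebra_simps)
  also have "\<dots> = (-(y - 0)\<^sup>2 / (2 * S) + -(u - r * y / S)\<^sup>2 / (2 * (\<sigma>\<^sup>2/S))) * (2*\<sigma>\<^sup>2*S)"
    using sp Sp by (simp add: field_simps power2_eq_square)
  finally show ?thesis using sp Sp by simp
qed

lemma dens_ident:
  fixes \<sigma> A u y :: real assumes sp: "\<sigma> > 0" and A: "A \<ge> 0"
  defines "s \<equiv> sqrt (\<sigma>\<^sup>2 + A)"
  shows "1/\<sigma> * (std_normal_density u * std_normal_density ((y - sqrt A * u)/\<sigma>))
     = normal_density 0 s y * normal_density (sqrt A * y / s\<^sup>2) (\<sigma>/s) u"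
proof -
  have s2: "s\<^sup>2 = \<sigma>\<^sup>2 + A" unfolding s_def using A by simp
  have spos: "s > 0" unfolding s_def using sp A by (simp add: add_pos_nonneg)
  have sA: "(sqrt A)\<^sup>2 = A" using A by simp
  have ex: "- u\<^sup>2 / 2 + - ((y - sqrt A * u)/\<sigma>)\<^sup>2 / 2
     = -(y - 0)\<^sup>2 / (2 * s\<^sup>2) + -(u - sqrt A * y / s\<^sup>2)\<^sup>2 / (2 * (\<sigma>/s)\<^sup>2)"
    using ex_aux[OF sp, of "s\<^sup>2" "sqrt A" u y] s2 sA by (simp add: power_divide)
  have pre: "sqrt (2 * pi * s\<^sup>2) * sqrt (2 * pi * (\<sigma>/s)\<^sup>2) = \<sigma> * (sqrt (2*pi) * sqrt (2*pi))"
  proof -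
    have "sqrt (2 * pi * s\<^sup>2) = sqrt (2*pi) * s" using spos by (simp add: real_sqrt_mult)
    moreover have "sqrt (2 * pi * (\<sigma>/s)\<^sup>2) = sqrt (2*pi) * (\<sigma>/s)" using spos sp by (simp add: real_sqrt_mult)
    ultimately show ?thesis using spos by simp
  qed
  have "1/\<sigma> * (std_normal_density u * std_normal_density ((y - sqrt A * u)/\<sigma>))
     = 1 / (\<sigma> * (sqrt (2*pi) * sqrt (2*pi))) * exp (- u\<^sup>2 / 2 + - ((y - sqrt A * u)/\<sigma>)\<^sup>2 / 2)"
    unfolding std_normal_density_def exp_add by simp
  also have "\<dots> = 1 / (sqrt (2 * pi * s\<^sup>2) * sqrt (2 * pi * (\<sigma>/s)\<^sup>2)) *
      exp (-(y - 0)\<^sup>2 / (2 * s\<^sup>2) + -(u - sqrt A * y / s\<^sup>2)\<^sup>2 / (2 * (\<sigma>/s)\<^sup>2))"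
    by (simp only: ex pre)
  also have "\<dots> = normal_density 0 s y * normal_density (sqrt A * y / s\<^sup>2) (\<sigma>/s) u"
    unfolding normal_density_def exp_add by (simp del: real_sqrt_mult)
  finally show ?thesis .
qed



lemma cond_risk_eq:
  fixes f :: "real \<Rightarrow> real" and mx A \<sigma> :: real
  assumes f[measurable]: "f \<in> borel_measurable borel" and A: "A \<ge> 0" and sp: "\<sigma> > 0"
  defines "s \<equiv> sqrt (\<sigma>\<^sup>2 + A)"
  shows "cond_risk f mx A \<sigma> =
    (\<integral>\<^sup>+z. ennreal (normal_density mx s z * (f z - (A/s\<^sup>2 * z + \<sigma>\<^sup>2/s\<^sup>2 * mx))\<^sup>2) \<partial>lborel)
     + ennreal (A * \<sigma>\<^sup>2 / s\<^sup>2)"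
proof -
  have s2: "s\<^sup>2 = \<sigma>\<^sup>2 + A" unfolding s_def using A by simp
  have spos: "s > 0" unfolding s_def using sp A by (simp add: add_pos_nonneg)
  have sA: "(sqrt A)\<^sup>2 = A" using A by simp
  define G where "G u z = ennreal (1/\<sigma> * (std_normal_density u * std_normal_density ((z - mx - sqrt A * u)/\<sigma>))
         * (f z - (mx + sqrt A * u))\<^sup>2)" for u z
  have Gm[measurable]: "(\<lambda>(u,z). G u z) \<in> borel_measurable (lborel \<Otimes>\<^sub>M lborel)"
    unfolding G_def by measurable
  have step1: "cond_risk f mx A \<sigma> = (\<integral>\<^sup>+u. \<integral>\<^sup>+v. ennreal (std_normal_density u * std_normal_density v *
        (f (mx + sqrt A * u + \<sigma> * v) - (mx + sqrt A * u))\<^sup>2) \<partial>lborel \<partial>lborel)"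
    unfolding cond_risk_def
    by (subst lborel.nn_integral_fst[symmetric]) (auto simp: case_prod_beta)
  have step2: "(\<integral>\<^sup>+v. ennreal (std_normal_density u * std_normal_density v *
        (f (mx + sqrt A * u + \<sigma> * v) - (mx + sqrt A * u))\<^sup>2) \<partial>lborel) = (\<integral>\<^sup>+z. G u z \<partial>lborel)" for u
  proof -
    have "(\<integral>\<^sup>+z. G u z \<partial>lborel) = ennreal \<bar>\<sigma>\<bar> * (\<integral>\<^sup>+v. G u ((mx + sqrt A * u) + \<sigma> * v) \<partial>lborel)"
      by (rule nn_integral_real_affine) (use sp in \<open>auto simp: G_def\<close>)
    also have "\<dots> = (\<integral>\<^sup>+v. ennreal \<sigma> * G u ((mx + sqrt A * u) + \<sigma> * v) \<partial>lborel)"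
      using sp by (subst nn_integral_cmult) (auto simp: G_def)
    also have "\<dots> = (\<integral>\<^sup>+v. ennreal (std_normal_density u * std_normal_density v *
        (f (mx + sqrt A * u + \<sigma> * v) - (mx + sqrt A * u))\<^sup>2) \<partial>lborel)"
      using sp by (intro nn_integral_cong) (simp add: G_def ennreal_mult[symmetric])
    finally show ?thesis by simp
  qed
  have step3: "(\<integral>\<^sup>+u. \<integral>\<^sup>+z. G u z \<partial>lborel \<partial>lborel) = (\<integral>\<^sup>+z. \<integral>\<^sup>+u. G u z \<partial>lborel \<partial>lborel)"
    using lborel_pair.Fubini[OF Gm] by simp
  have step4: "(\<integral>\<^sup>+u. G u z \<partial>lborel) = ennreal (normal_density mx s z * (f z - (A/s\<^sup>2 * z + \<sigma>\<^sup>2/s\<^sup>2 * mx))\<^sup>2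
       + normal_density mx s z * (A * \<sigma>\<^sup>2 / s\<^sup>2))" for z
  proof -
    have "(\<integral>\<^sup>+u. G u z \<partial>lborel) = (\<integral>\<^sup>+u. ennreal (normal_density mx s z) *
       ennreal (normal_density (sqrt A * (z - mx) / s\<^sup>2) (\<sigma>/s) u * ((f z - mx) - sqrt A * u)\<^sup>2) \<partial>lborel)"
    proof (intro nn_integral_cong)
      fix u
      have "1/\<sigma> * (std_normal_density u * std_normal_density ((z - mx - sqrt A * u)/\<sigma>))
         = normal_density 0 s (z - mx) * normal_density (sqrt A * (z - mx) / s\<^sup>2) (\<sigma>/s) u"
        using dens_ident[OF sp A, of u "z - mx"] unfolding s_def by (simp add: algebra_simps)
      moreover have "normal_density 0 s (z - mx) = normal_density mx s z"
        unfolding normal_density_def by simp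
      ultimately show "G u z = ennreal (normal_density mx s z) *
       ennreal (normal_density (sqrt A * (z - mx) / s\<^sup>2) (\<sigma>/s) u * ((f z - mx) - sqrt A * u)\<^sup>2)"
        unfolding G_def by (simp add: ennreal_mult[symmetric] algebra_simps)
    qed
    also have "\<dots> = ennreal (normal_density mx s z) * ennreal (((f z - mx) - sqrt A * (sqrt A * (z - mx) / s\<^sup>2))\<^sup>2
          + (sqrt A)\<^sup>2 * (\<sigma>/s)\<^sup>2)"
      using sp spos by (subst nn_integral_cmult) (simp_all add: gauss_quad)
    also have "\<dots> = ennreal (normal_density mx s z * (f z - (A/s\<^sup>2 * z + \<sigma>\<^sup>2/s\<^sup>2 * mx))\<^sup>2
       + normal_density mx s z * (A * \<sigma>\<^sup>2 / s\<^sup>2))"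
    proof -
      have eq1: "(f z - mx) - sqrt A * (sqrt A * (z - mx) / s\<^sup>2) = f z - (A/s\<^sup>2 * z + \<sigma>\<^sup>2/s\<^sup>2 * mx)"
        proof -
        have pA: "A + \<sigma>\<^sup>2 > 0" using sp A by (simp add: add_nonneg_pos)
        have "sqrt A * (sqrt A * (z - mx) / s\<^sup>2) = A * (z - mx) / (A + \<sigma>\<^sup>2)"
          using sA s2 by (simp add: power2_eq_square[symmetric] add.commute)
        moreover have "A/s\<^sup>2 * z + \<sigma>\<^sup>2/s\<^sup>2 * mx = mx + A * (z - mx) / (A + \<sigma>\<^sup>2)"
        proof -
          have s2': "A + \<sigma>\<^sup>2 = s\<^sup>2" using s2 by simp
          have "A/s\<^sup>2 * z + \<sigma>\<^sup>2/s\<^sup>2 * mx = (A*z + \<sigma>\<^sup>2*mx)/s\<^sup>2" by (simp add: add_divide_distrib)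
          moreover have "mx + A * (z - mx) / s\<^sup>2 = (mx * s\<^sup>2 + A*(z-mx))/s\<^sup>2" using spos by (simp add: field_simps)
          moreover have "mx * s\<^sup>2 + A*(z-mx) = A*z + \<sigma>\<^sup>2*mx" unfolding s2 by (simp add: algebra_simps)
          ultimately show ?thesis unfolding s2' by simp
        qed
        ultimately show ?thesis by simp
      qed
      moreover have eq2: "(sqrt A)\<^sup>2 * (\<sigma>/s)\<^sup>2 = A * \<sigma>\<^sup>2 / s\<^sup>2" using sA by (simp add: power_divide)
      have nn: "0 \<le> A * \<sigma>\<^sup>2 / s\<^sup>2" using A by simp
      show ?thesis unfolding eq1 eq2 distrib_left[symmetric]
        by (rule ennreal_mult[symmetric]) (use nn in auto)
    qed
    finally show ?thesis .
  qed
  have int1: "(\<integral>\<^sup>+z. ennreal (normal_density mx s z) \<partial>lborel) = 1"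
    using integrable_normal_density[OF spos] integral_normal_density[OF spos] by (subst nn_integral_eq_integral) auto
  have "cond_risk f mx A \<sigma> = (\<integral>\<^sup>+z. \<integral>\<^sup>+u. G u z \<partial>lborel \<partial>lborel)"
    using step1 step2 step3 by simp
  also have "\<dots> = (\<integral>\<^sup>+z. ennreal (normal_density mx s z * (f z - (A/s\<^sup>2 * z + \<sigma>\<^sup>2/s\<^sup>2 * mx))\<^sup>2)
       + ennreal (A * \<sigma>\<^sup>2 / s\<^sup>2) * ennreal (normal_density mx s z) \<partial>lborel)"
  proof (intro nn_integral_cong)
    fix z
    have n1: "0 \<le> normal_density mx s z * (f z - (A/s\<^sup>2 * z + \<sigma>\<^sup>2/s\<^sup>2 * mx))\<^sup>2" by simp
    have n2: "0 \<le> normal_density mx s z * (A * \<sigma>\<^sup>2 / s\<^sup>2)" using A by simp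
    have n3: "0 \<le> A * \<sigma>\<^sup>2 / s\<^sup>2" using A by simp
    show "(\<integral>\<^sup>+u. G u z \<partial>lborel) = ennreal (normal_density mx s z * (f z - (A/s\<^sup>2 * z + \<sigma>\<^sup>2/s\<^sup>2 * mx))\<^sup>2)
       + ennreal (A * \<sigma>\<^sup>2 / s\<^sup>2) * ennreal (normal_density mx s z)"
      unfolding step4 ennreal_plus[OF n1 n2] ennreal_mult[OF n3 normal_density_nonneg, symmetric]
      by (simp only: mult.commute)
  qed
  also have "\<dots> = (\<integral>\<^sup>+z. ennreal (normal_density mx s z * (f z - (A/s\<^sup>2 * z + \<sigma>\<^sup>2/s\<^sup>2 * mx))\<^sup>2) \<partial>lborel)
       + ennreal (A * \<sigma>\<^sup>2 / s\<^sup>2) * (\<integral>\<^sup>+z. ennreal (normal_density mx s z) \<partial>lborel)"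
    by (subst nn_integral_add) (auto simp: nn_integral_cmult)
  finally show ?thesis using int1 by simp
qed



lemma nd_lower:
  fixes m z s :: real assumes spos: "s > 0" and hz: "\<bar>z - m\<bar> \<le> 3/2 * s"
  shows "normal_density m s z \<ge> exp (-9/8) / (sqrt (2*pi) * s)"
proof -
  have "(z - m)\<^sup>2 \<le> (3/2* s)\<^sup>2" using hz spos
    by (metis abs_ge_zero power2_abs power_mono)
  then have "(z-m)\<^sup>2 / (2 * s\<^sup>2) \<le> 9/8" using spos by (simp add: field_simps power2_eq_square)
  then have e: "exp (-9/8) \<le> exp (-(z - m)\<^sup>2/ (2 * s\<^sup>2))" by simp
  have sq: "sqrt (2 * pi * s\<^sup>2) = sqrt (2*pi) * s" using spos by (simp add: real_sqrt_mult)
  show ?thesis unfolding normal_density_def sq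
    using e spos by (simp add: divide_right_mono)
qed

lemma sum_lower:
  fixes f :: "real \<Rightarrow> real" and m1 m2 A \<sigma> :: real
  assumes f[measurable]: "f \<in> borel_measurable borel" and A: "A \<ge> 0" and sp: "\<sigma> > 0"
    and s_def: "s = sqrt (\<sigma>\<^sup>2 + A)" and d: "\<bar>m1 - m2\<bar> / s \<le> 1"
  shows "(\<integral>\<^sup>+z. ennreal (normal_density m1 s z * (f z - (A/s\<^sup>2 * z + \<sigma>\<^sup>2/s\<^sup>2 * m1))\<^sup>2) \<partial>lborel)
       + (\<integral>\<^sup>+z. ennreal (normal_density m2 s z * (f z - (A/s\<^sup>2 * z + \<sigma>\<^sup>2/s\<^sup>2 * m2))\<^sup>2) \<partial>lborel)
       \<ge> ennreal (exp (-9/8) / sqrt (2*pi) * (\<sigma>\<^sup>2/s\<^sup>2)\<^sup>2 * (m1 - m2)\<^sup>2)"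
proof -
  have spos: "s > 0" unfolding s_def using sp A by (simp add: add_pos_nonneg)
  define mb where "mb = (m1 + m2)/2"
  define K where "K = exp (-9/8) / (sqrt (2*pi) * s)"
  define B where "B = (\<sigma>\<^sup>2/s\<^sup>2)\<^sup>2 * (m1 - m2)\<^sup>2 / 2"
  have Kpos: "K \<ge> 0" unfolding K_def using spos by simp
  have Bpos: "B \<ge> 0" unfolding B_def by simp
  have dd: "\<bar>m1 - m2\<bar> \<le> s" using d spos by (simp add: divide_le_eq)
  have pw: "ennreal (K*B) * indicator {mb - s..mb + s} z \<le>
      ennreal (normal_density m1 s z * (f z - (A/s\<^sup>2 * z + \<sigma>\<^sup>2/s\<^sup>2 * m1))\<^sup>2) +
      ennreal (normal_density m2 s z * (f z - (A/s\<^sup>2 * z + \<sigma>\<^sup>2/s\<^sup>2 * m2))\<^sup>2)" for z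
  proof (cases "z \<in> {mb - s..mb + s}")
    case False then show ?thesis by simp
  next
    case True
    then have hz: "\<bar>z - mb\<bar> \<le> s" by auto
    have h1: "\<bar>z - m1\<bar> \<le> 3/2* s" using hz dd unfolding mb_def abs_le_iff by (auto simp: field_simps)
    have h2: "\<bar>z - m2\<bar> \<le> 3/2* s" using hz dd unfolding mb_def abs_le_iff by (auto simp: field_simps)
    have k1: "K \<le> normal_density m1 s z" using nd_lower[OF spos h1] unfolding K_def .
    have k2: "K \<le> normal_density m2 s z" using nd_lower[OF spos h2] unfolding K_def .
    define p where "p = f z - (A/s\<^sup>2 * z + \<sigma>\<^sup>2/s\<^sup>2 * m1)"
    define q where "q = f z - (A/s\<^sup>2 * z + \<sigma>\<^sup>2/s\<^sup>2 * m2)"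
    have "q - p = \<sigma>\<^sup>2/s\<^sup>2 * (m1 - m2)" unfolding p_def q_def by (simp add: algebra_simps diff_divide_distrib)
    then have "B = (q - p)\<^sup>2 / 2" unfolding B_def by (simp add: power_mult_distrib power_divide)
    also have "\<dots> \<le> p\<^sup>2 + q\<^sup>2" proof -
      have "p\<^sup>2 + q\<^sup>2 - (q - p)\<^sup>2 / 2 = (p + q)\<^sup>2 / 2" by (simp add: power2_eq_square field_simps)
      moreover have "(p + q)\<^sup>2 / 2 \<ge> 0" by simp
      ultimately show ?thesis by linarith
    qed
    finally have "K * B \<le> K * p\<^sup>2 + K * q\<^sup>2" using Kpos by (simp add: mult_left_mono distrib_left[symmetric])
    also have "\<dots> \<le> normal_density m1 s z * p\<^sup>2 + normal_density m2 s z * q\<^sup>2"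
      using k1 k2 by (intro add_mono mult_right_mono) auto
    finally have "K*B \<le> normal_density m1 s z * p\<^sup>2 + normal_density m2 s z * q\<^sup>2" .
    then show ?thesis using True unfolding p_def q_def
      by (simp add: ennreal_plus[symmetric] del: ennreal_plus)
  qed
  have "ennreal (K*B) * ennreal (2* s) = (\<integral>\<^sup>+z. ennreal (K*B) * indicator {mb - s..mb + s} z \<partial>lborel)"
    using spos by (simp add: nn_integral_cmult_indicator)
  also have "\<dots> \<le> (\<integral>\<^sup>+z. ennreal (normal_density m1 s z * (f z - (A/s\<^sup>2 * z + \<sigma>\<^sup>2/s\<^sup>2 * m1))\<^sup>2) +
      ennreal (normal_density m2 s z * (f z - (A/s\<^sup>2 * z + \<sigma>\<^sup>2/s\<^sup>2 * m2))\<^sup>2) \<partial>lborel)"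
    by (intro nn_integral_mono pw)
  also have "\<dots> = (\<integral>\<^sup>+z. ennreal (normal_density m1 s z * (f z - (A/s\<^sup>2 * z + \<sigma>\<^sup>2/s\<^sup>2 * m1))\<^sup>2) \<partial>lborel)
       + (\<integral>\<^sup>+z. ennreal (normal_density m2 s z * (f z - (A/s\<^sup>2 * z + \<sigma>\<^sup>2/s\<^sup>2 * m2))\<^sup>2) \<partial>lborel)"
    by (rule nn_integral_add) auto
  finally have main: "ennreal (K*B) * ennreal (2* s) \<le> \<dots>" .
  have "K*B*(2* s) = exp (-9/8) / sqrt (2*pi) * (\<sigma>\<^sup>2/s\<^sup>2)\<^sup>2 * (m1 - m2)\<^sup>2"
    unfolding K_def B_def using spos by (simp add: field_simps)
  then show ?thesis using main Kpos Bpos spos by (simp add: ennreal_mult[symmetric])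
qed



lemma excess_eq:
  fixes t :: "'x \<times> real \<Rightarrow> real" and m :: "'x \<Rightarrow> real"
  assumes f: "(\<lambda>z. t (x, z)) \<in> borel_measurable borel" and A: "A \<ge> 0" and sp: "\<sigma> > 0"
  defines "s \<equiv> sqrt (\<sigma>\<^sup>2 + A)"
  shows "excess_risk t m A \<sigma> x = enn2ereal
    (\<integral>\<^sup>+z. ennreal (normal_density (m x) s z * (t (x, z) - (A/s\<^sup>2 * z + \<sigma>\<^sup>2/s\<^sup>2 * m x))\<^sup>2) \<partial>lborel)"
proof -
  have s2: "s\<^sup>2 = \<sigma>\<^sup>2 + A" unfolding s_def using A by simp
  have tm: "(\<lambda>z. tstar m A \<sigma> (x, z)) \<in> borel_measurable borel" unfolding tstar_def by simp
  have ts: "tstar m A \<sigma> (x, z) = A/s\<^sup>2 * z + \<sigma>\<^sup>2/s\<^sup>2 * m x" for z unfolding tstar_def s2 by simp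
  have C: "0 \<le> A * \<sigma>\<^sup>2 / s\<^sup>2" using A by simp
  have e1: "cond_risk (\<lambda>z. t (x, z)) (m x) A \<sigma> = (\<integral>\<^sup>+z. ennreal (normal_density (m x) s z * (t (x, z) - (A/s\<^sup>2 * z + \<sigma>\<^sup>2/s\<^sup>2 * m x))\<^sup>2) \<partial>lborel) + ennreal (A * \<sigma>\<^sup>2 / s\<^sup>2)"
    using cond_risk_eq[OF f A sp, of "m x"] unfolding s_def by simp
  have e2: "cond_risk (\<lambda>z. tstar m A \<sigma> (x, z)) (m x) A \<sigma> = ennreal (A * \<sigma>\<^sup>2 / s\<^sup>2)"
    using cond_risk_eq[OF tm A sp, of "m x"] unfolding s_def[symmetric] ts by simp
  show ?thesis
    unfolding excess_risk_def e1 e2 plus_ennreal.rep_eq enn2ereal_ennreal[OF C]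
    by (cases "enn2ereal (\<integral>\<^sup>+z. ennreal (normal_density (m x) s z * (t (x, z) - (A/s\<^sup>2 * z + \<sigma>\<^sup>2/s\<^sup>2 * m x))\<^sup>2) \<partial>lborel)") auto
qed

theorem lemma2:
  "\<exists>c::real. c > 0 \<and> (\<exists>\<Delta>::real. \<Delta> > 0 \<and>
     (\<forall>(A::real) (\<sigma>::real) (m1::'x \<Rightarrow> real) (m2::'x \<Rightarrow> real) (x::'x) (t::'x \<times> real \<Rightarrow> real).
        A \<ge> 0 \<longrightarrow> \<sigma> > 0 \<longrightarrow>
        \<bar>m1 x - m2 x\<bar> / sqrt (\<sigma>\<^sup>2 + A) \<le> \<Delta> \<longrightarrow>
        (\<lambda>z. t (x, z)) \<in> borel_measurable borel \<longrightarrow>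
        ereal (1/2) * (excess_risk t m1 A \<sigma> x + excess_risk t m2 A \<sigma> x)
          \<ge> ereal (c * \<sigma>^4 / (\<sigma>\<^sup>2 + A)\<^sup>2 * (m1 x - m2 x)\<^sup>2)))"
proof (intro exI conjI allI impI)
  show "exp (-9/8) / (2 * sqrt (2*pi)) > (0::real)" by simp
  show "(1::real) > 0" by simp
  fix A \<sigma> :: real and m1 m2 :: "'x \<Rightarrow> real" and x :: 'x and t :: "'x \<times> real \<Rightarrow> real"
  assume A: "A \<ge> 0" and sp: "\<sigma> > 0" and d: "\<bar>m1 x - m2 x\<bar> / sqrt (\<sigma>\<^sup>2 + A) \<le> 1"
    and f[measurable]: "(\<lambda>z. t (x, z)) \<in> borel_measurable borel"
  define s where "s = sqrt (\<sigma>\<^sup>2 + A)"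
  have s2: "s\<^sup>2 = \<sigma>\<^sup>2 + A" unfolding s_def using A by simp
  define V where "V = exp (-9/8) / sqrt (2*pi) * (\<sigma>\<^sup>2/s\<^sup>2)\<^sup>2 * (m1 x - m2 x)\<^sup>2"
  have V0: "V \<ge> 0" unfolding V_def by simp
  note low = sum_lower[OF f A sp s_def, of "m1 x" "m2 x"]
  have "ereal V \<le> excess_risk t m1 A \<sigma> x + excess_risk t m2 A \<sigma> x"
    unfolding excess_eq[OF f A sp] s_def[symmetric]
    using low d unfolding s_def[symmetric] V_def[symmetric]
    by (simp add: less_eq_ennreal.rep_eq plus_ennreal.rep_eq V0)
  then have h1: "ereal (1/2) * ereal V \<le> ereal (1/2) * (excess_risk t m1 A \<sigma> x + excess_risk t m2 A \<sigma> x)"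
    by (rule ereal_mult_left_mono) simp
  have h2: "exp (-9/8) / (2 * sqrt (2*pi)) * \<sigma>^4 / (\<sigma>\<^sup>2 + A)\<^sup>2 * (m1 x - m2 x)\<^sup>2 = 1/2 * V"
    unfolding V_def s2 by (simp add: power_divide power2_eq_square[symmetric] field_simps)
  show "ereal (exp (-9/8) / (2 * sqrt (2*pi)) * \<sigma>^4 / (\<sigma>\<^sup>2 + A)\<^sup>2 * (m1 x - m2 x)\<^sup>2)
     \<le> ereal (1/2) * (excess_risk t m1 A \<sigma> x + excess_risk t m2 A \<sigma> x)"
    unfolding h2 times_ereal.simps(1)[symmetric] by (rule h1)
qed


end
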